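(* If $\phi\in C(\mathbb{Z}_p,\mathbb{C}_p)$ and $y\in\mathbb{Z}_p$, then in $\mathbb{C}_p[[t]]$ $$(1-t)^yA(\phi)=A(S^y(\phi))\quad\text{and}\quad(1-t)^yP(\phi)=P(S^y(\phi)).$$
   Context: Fix a prime $p$. $\mathbb{C}_p$ denotes the completion of an algebraic closure of $\mathbb{Q}_p$, with absolute value $|\cdot|$ normalized by $|p|=1/p$. $C(\mathbb{Z}_p,\mathbb{C}_p)$ is the $\mathbb{C}_p$-Banach space of continuous functions $\mathbb{Z}_p\to\mathbb{C}_p$ with the sup-norm $\|\cdot\|$. For $n\in\mathbb{Z}_{\ge0}$ and $x\in\mathbb{Z}_p$, $\binom{x}{n}=x(x-1)\cdots(x-n+1)/n!$. For $\phi\in C(\mathbb{Z}_p,\mathbb{C}_p)$ let $(\nabla\phi)(x)=\phi(x+1)-\phi(x)$; every such $\phi$ has the Mahler expansion $\phi(x)=\sum_{n\ge0}(\nabla^n\phi)(0)\binom{x}{n}$. Define $P(\phi)=\sum_{n\ge0}(\nabla^n\phi)(0)\,t^n/n!$ and $A(\phi)=\sum_{n\ge0}\phi(n)\,t^n/n!=e^{t}P(\phi)$ in $\mathbb{C}_p[[t]]$. For $y\in\mathbb{Z}_p$ define $S^y(\phi)\in C(\mathbb{Z}_p,\mathbb{C}_p)$ by $S^y(\phi)(x)=\sum_{k\ge0}(-1)^k k!\binom yk\binom xk\phi(x-k)$. For $y\in\mathbb{Z}_p$, $(1-t)^y:=\sum_{k\ge0}(-1)^k\binom yk t^k\in\mathbb{C}_p[[t]]$.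 *)

theory Defs
  imports "HOL-Computational_Algebra.Computational_Algebra"
begin

text \<open>The field C_p is modelled axiomatically: a field K of characteristic 0 together with
an absolute value nabs such that (K, nabs) is a model of C_p, namely the completion of an
algebraic closure of Q with respect to an absolute value extending the p-adic absolute value
of Q (normalised by |p| = 1/p). Any two such models are isometrically isomorphic.\<close>

definition is_abs :: "('a::field \<Rightarrow> real) \<Rightarrow> bool" where
  "is_abs nabs \<longleftrightarrow>
     (\<forall>x. nabs x \<ge> 0) \<and> (\<forall>x. nabs x = 0 \<longleftrightarrow> x = 0) \<and>
     (\<forall>x y. nabs (x * y) = nabs x * nabs y) \<and>
     (\<forall>x y. nabs (x + y) \<le> max (nabs x) (nabs y))"

definition is_complete_abs :: "('a::field \<Rightarrow> real) \<Rightarrow> bool" where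
  "is_complete_abs nabs \<longleftrightarrow>
     (\<forall>X :: nat \<Rightarrow> 'a.
        (\<forall>e>0. \<exists>N. \<forall>m\<ge>N. \<forall>n\<ge>N. nabs (X m - X n) < e) \<longrightarrow>
        (\<exists>L. \<forall>e>0. \<exists>N. \<forall>n\<ge>N. nabs (X n - L) < e))"

definition algebraic_over_rat :: "'a::field_char_0 \<Rightarrow> bool" where
  "algebraic_over_rat a \<longleftrightarrow> (\<exists>q :: rat poly. q \<noteq> 0 \<and> poly (map_poly of_rat q) a = 0)"

definition is_Cp :: "nat \<Rightarrow> ('a::field_char_0 \<Rightarrow> real) \<Rightarrow> bool" where
  "is_Cp p nabs \<longleftrightarrow>
     is_abs nabs \<and> nabs (of_nat p) = 1 / real p \<and> is_complete_abs nabs \<and>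
     (\<forall>x. \<forall>e>0. \<exists>a. algebraic_over_rat a \<and> nabs (x - a) < e)"

definition Zp :: "('a::field_char_0 \<Rightarrow> real) \<Rightarrow> 'a set" where
  "Zp nabs = {x. \<forall>e>0. \<exists>n::int. nabs (x - of_int n) < e}"

definition continuous_on_abs :: "('a::field \<Rightarrow> real) \<Rightarrow> 'a set \<Rightarrow> ('a \<Rightarrow> 'a) \<Rightarrow> bool" where
  "continuous_on_abs nabs S f \<longleftrightarrow>
     (\<forall>x\<in>S. \<forall>e>0. \<exists>d>0. \<forall>x'\<in>S. nabs (x' - x) < d \<longrightarrow> nabs (f x' - f x) < e)"

definition sums_abs :: "('a::field \<Rightarrow> real) \<Rightarrow> (nat \<Rightarrow> 'a) \<Rightarrow> 'a \<Rightarrow> bool" where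
  "sums_abs nabs f s \<longleftrightarrow> (\<forall>e>0. \<exists>N. \<forall>n\<ge>N. nabs ((\<Sum>k<n. f k) - s) < e)"

definition suminf_abs :: "('a::field \<Rightarrow> real) \<Rightarrow> (nat \<Rightarrow> 'a) \<Rightarrow> 'a" where
  "suminf_abs nabs f = (THE s. sums_abs nabs f s)"

definition bin :: "'a::field_char_0 \<Rightarrow> nat \<Rightarrow> 'a" where
  "bin x n = (\<Prod>i<n. x - of_nat i) / fact n"

definition nabla :: "('a::field_char_0 \<Rightarrow> 'a) \<Rightarrow> 'a \<Rightarrow> 'a" where
  "nabla f = (\<lambda>x. f (x + 1) - f x)"

definition Pser :: "('a::field_char_0 \<Rightarrow> 'a) \<Rightarrow> 'a fps" where
  "Pser f = Abs_fps (\<lambda>n. (nabla ^^ n) f 0 / fact n)"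

definition Aser :: "('a::field_char_0 \<Rightarrow> 'a) \<Rightarrow> 'a fps" where
  "Aser f = Abs_fps (\<lambda>n. f (of_nat n) / fact n)"

definition Sy :: "('a::field_char_0 \<Rightarrow> real) \<Rightarrow> 'a \<Rightarrow> ('a \<Rightarrow> 'a) \<Rightarrow> 'a \<Rightarrow> 'a" where
  "Sy nabs y f x =
     suminf_abs nabs (\<lambda>k. (-1) ^ k * fact k * bin y k * bin x k * f (x - of_nat k))"

definition one_minus_t_pow :: "'a::field_char_0 \<Rightarrow> 'a fps" where
  "one_minus_t_pow y = Abs_fps (\<lambda>k. (-1) ^ k * bin y k)"

end

theory Submission
  imports Defs
begin

lemma bin_gchoose: "bin x n = x gchoose n"
  by (simp add: bin_def gbinomial_prod_rev atLeast0LessThan)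

lemma bin_nat: "bin (of_nat n :: 'a::field_char_0) k = of_nat (n choose k)"
  by (simp add: bin_gchoose binomial_gbinomial)

lemma abs_basic:
  assumes "is_abs nabs"
  shows "nabs (- x) = nabs x"
proof -
  have m: "\<And>x y. nabs (x * y) = nabs x * nabs y" and z: "\<And>x. nabs x = 0 \<longleftrightarrow> x = 0"
    and nn: "\<And>x. nabs x \<ge> 0"
    using assms unfolding is_abs_def by auto
  have "nabs 1 = nabs 1 * nabs 1" using m[of 1 1] by simp
  then have one: "nabs 1 = 1" using z[of 1] by (metis mult_cancel_left1 one_neq_zero)
  have "nabs (-1) * nabs (-1) = 1" using m[of "-1" "-1"] one by simp
  then have "nabs (-1) = 1" using nn[of "-1"]
    by (metis abs_of_nonneg abs_square_eq_1 power2_eq_square)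
  then show ?thesis using m[of "-1" x] by simp
qed

lemma sums_abs_unique:
  assumes "is_abs nabs" "sums_abs nabs f s" "sums_abs nabs f s'"
  shows "s = s'"
proof -
  have tri: "\<And>x y. nabs (x + y) \<le> max (nabs x) (nabs y)" and z: "\<And>x. nabs x = 0 \<longleftrightarrow> x = 0"
    and nn: "\<And>x. nabs x \<ge> 0"
    using assms(1) unfolding is_abs_def by auto
  have "nabs (s - s') < e" if e: "e > 0" for e
  proof -
    obtain N1 where N1: "\<forall>n\<ge>N1. nabs ((\<Sum>k<n. f k) - s) < e" using assms(2) e unfolding sums_abs_def by blast
    obtain N2 where N2: "\<forall>n\<ge>N2. nabs ((\<Sum>k<n. f k) - s') < e" using assms(3) e unfolding sums_abs_def by blast
    define S where "S = (\<Sum>k<max N1 N2. f k)"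
    have a: "nabs (S - s) < e" "nabs (S - s') < e" using N1 N2 S_def by auto
    have "s - s' = (S - s') + (- (S - s))" by simp
    then have "nabs (s - s') \<le> max (nabs (S - s')) (nabs (- (S - s)))" using tri by metis
    then show ?thesis using a abs_basic[OF assms(1), of "S - s"] by simp
  qed
  then have "nabs (s - s') = 0" using nn[of "s - s'"]
    by (metis less_irrefl order_le_less)
  then show ?thesis using z by simp
qed

lemma sums_abs_finite:
  assumes "is_abs nabs" "\<And>k. k > n \<Longrightarrow> f k = 0"
  shows "sums_abs nabs f (\<Sum>k\<le>n. f k)"
  unfolding sums_abs_def
proof (intro allI impI)
  fix e :: real assume e: "e > 0"
  have "\<forall>m\<ge>Suc n. (\<Sum>k<m. f k) = (\<Sum>k\<le>n. f k)"
  proof (intro allI impI)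
    fix m assume "m \<ge> Suc n"
    then have "(\<Sum>k<m. f k) = (\<Sum>k<Suc n. f k)"
      by (intro sum.mono_neutral_right) (auto simp: assms(2))
    then show "(\<Sum>k<m. f k) = (\<Sum>k\<le>n. f k)" by (simp add: lessThan_Suc_atMost)
  qed
  moreover have "nabs 0 = 0" using assms(1) unfolding is_abs_def by auto
  ultimately show "\<exists>N. \<forall>m\<ge>N. nabs ((\<Sum>k<m. f k) - (\<Sum>k\<le>n. f k)) < e"
    using e by (intro exI[of _ "Suc n"]) auto
qed

lemma Sy_nat:
  assumes "is_abs nabs"
  shows "Sy nabs y f (of_nat n) =
    (\<Sum>k\<le>n. (-1) ^ k * fact k * bin y k * of_nat (n choose k) * f (of_nat (n - k)))"
proof -
  let ?g = "\<lambda>k. (-1) ^ k * fact k * bin y k * bin (of_nat n) k * f (of_nat n - of_nat k)"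
  have "sums_abs nabs ?g (\<Sum>k\<le>n. ?g k)"
    by (rule sums_abs_finite[OF assms]) (simp add: bin_nat binomial_eq_0)
  then have "Sy nabs y f (of_nat n) = (\<Sum>k\<le>n. ?g k)"
    unfolding Sy_def suminf_abs_def using sums_abs_unique[OF assms] by blast
  also have "\<dots> = (\<Sum>k\<le>n. (-1) ^ k * fact k * bin y k * of_nat (n choose k) * f (of_nat (n - k)))"
    by (intro sum.cong) (auto simp: bin_nat of_nat_diff)
  finally show ?thesis .
qed

lemma nabla_pow_formula:
  "(nabla ^^ k) f x = (\<Sum>j\<le>k. (-1) ^ (k + j) * of_nat (k choose j) * f (x + of_nat j))"
proof (induction k arbitrary: f x)
  case 0
  then show ?case by simp
next
  case (Suc k)
  have "(nabla ^^ Suc k) f x = (nabla ^^ k) (nabla f) x" by (simp only: funpow_Suc_right comp_def)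
  also have "\<dots> = (\<Sum>j\<le>k. (-1) ^ (k + j) * of_nat (k choose j) * (f (x + of_nat (Suc j)) - f (x + of_nat j)))"
    by (simp add: Suc.IH nabla_def ac_simps)
  also have "\<dots> = (\<Sum>j\<le>k. (-1) ^ (k + j) * of_nat (k choose j) * f (x + of_nat (Suc j)))
      - (\<Sum>j\<le>k. (-1) ^ (k + j) * of_nat (k choose j) * f (x + of_nat j))"
    by (simp add: algebra_simps sum_subtractf)
  also have "\<dots> = (\<Sum>j\<le>Suc k. (-1) ^ (Suc k + j) * of_nat (Suc k choose j) * f (x + of_nat j))"
  proof -
    let ?A = "\<lambda>j. (-1) ^ (k + j) * of_nat (k choose j) * f (x + of_nat (Suc j))"
    let ?B = "\<lambda>j. (-1) ^ (k + j) * of_nat (k choose Suc j) * f (x + of_nat (Suc j))"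
    have R: "(\<Sum>j\<le>Suc k. (-1) ^ (Suc k + j) * of_nat (Suc k choose j) * f (x + of_nat j))
       = (\<Sum>j\<le>k. ?A j) + (\<Sum>j\<le>k. ?B j) + (-1) ^ Suc k * f x"
    proof -
      have g: "(-1) ^ (Suc k + Suc j) * of_nat (Suc k choose Suc j) * f (x + of_nat (Suc j)) = ?A j + ?B j" for j
        by (simp add: algebra_simps)
      have "(\<Sum>j\<le>Suc k. (-1) ^ (Suc k + j) * of_nat (Suc k choose j) * f (x + of_nat j))
         = (-1) ^ (Suc k + 0) * of_nat (Suc k choose 0) * f (x + of_nat 0)
           + (\<Sum>j\<le>k. (-1) ^ (Suc k + Suc j) * of_nat (Suc k choose Suc j) * f (x + of_nat (Suc j)))"
        by (rule sum.atMost_Suc_shift)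
      also have "\<dots> = (-1) ^ Suc k * f x + (\<Sum>j\<le>k. ?A j + ?B j)"
        by (simp only: g) simp
      finally show ?thesis by (simp add: sum.distrib algebra_simps)
    qed
    have L: "(\<Sum>j\<le>k. (-1) ^ (k + j) * of_nat (k choose j) * f (x + of_nat j))
       = (-1) ^ k * f x - (\<Sum>j\<le>k. ?B j)"
    proof -
      have "(\<Sum>j\<le>Suc k. (-1) ^ (k + j) * of_nat (k choose j) * f (x + of_nat j))
         = (\<Sum>j\<le>k. (-1) ^ (k + j) * of_nat (k choose j) * f (x + of_nat j))"
        by simp
      moreover have "(\<Sum>j\<le>Suc k. (-1) ^ (k + j) * of_nat (k choose j) * f (x + of_nat j))
         = (-1) ^ k * f x - (\<Sum>j\<le>k. ?B j)"
        by (simp only: sum.atMost_Suc_shift) (simp add: sum_negf[symmetric])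
      ultimately show ?thesis by (simp add: binomial_eq_0)
    qed
    show ?thesis using R L by simp
  qed
  finally show ?case .
qed

lemma Pser_Aser: "Pser f = fps_exp (-1) * Aser f"
proof (rule fps_ext)
  fix n
  have "(fps_exp (-1) * Aser f) $ n = (Aser f * fps_exp (-1)) $ n" by (simp add: mult.commute)
  also have "\<dots> = (\<Sum>i=0..n. f (of_nat i) / fact i * ((-1) ^ (n - i) / fact (n - i)))"
    by (simp add: fps_mult_nth Aser_def)
  also have "\<dots> = (\<Sum>j\<le>n. (-1) ^ (n + j) * of_nat (n choose j) * f (0 + of_nat j)) / fact n"
    unfolding sum_divide_distrib atLeast0AtMost
  proof (intro sum.cong refl)
    fix j assume "j \<in> {..n}"
    then have j: "j \<le> n" by simp
    have s: "(-1) ^ (n - j) = ((-1) ^ (n + j) :: 'a)"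
    proof -
      have "(-1::'a) ^ (n + j) = (-1) ^ ((n - j) + 2 * j)"
        by (rule arg_cong[where f="\<lambda>m. (-1::'a) ^ m"]) (use j in simp)
      also have "\<dots> = (-1) ^ (n - j)" by (simp only: power_add power_mult) simp
      finally show ?thesis by simp
    qed
    show "f (of_nat j) / fact j * ((-1) ^ (n - j) / fact (n - j)) =
          (-1) ^ (n + j) * of_nat (n choose j) * f (0 + of_nat j) / fact n"
      using j by (simp add: s binomial_fact field_simps)
  qed
  also have "\<dots> = Pser f $ n" by (simp add: Pser_def nabla_pow_formula)
  finally show "Pser f $ n = (fps_exp (-1) * Aser f) $ n" ..
qed

lemma A_part:
  assumes "is_abs nabs"
  shows "one_minus_t_pow y * Aser phi = Aser (Sy nabs y phi)"
proof (rule fps_ext)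
  fix n
  have "(one_minus_t_pow y * Aser phi) $ n = (\<Sum>k=0..n. (-1) ^ k * bin y k * (phi (of_nat (n - k)) / fact (n - k)))"
    by (simp add: fps_mult_nth one_minus_t_pow_def Aser_def)
  also have "\<dots> = (\<Sum>k\<le>n. (-1) ^ k * fact k * bin y k * of_nat (n choose k) * phi (of_nat (n - k))) / fact n"
    unfolding sum_divide_distrib atLeast0AtMost
  proof (intro sum.cong refl)
    fix k assume "k \<in> {..n}"
    then have k: "k \<le> n" by simp
    show "(-1) ^ k * bin y k * (phi (of_nat (n - k)) / fact (n - k)) =
       (-1) ^ k * fact k * bin y k * of_nat (n choose k) * phi (of_nat (n - k)) / fact n"
      using k by (simp add: binomial_fact field_simps)
  qed
  also have "\<dots> = Aser (Sy nabs y phi) $ n"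
    by (simp add: Aser_def Sy_nat[OF assms])
  finally show "(one_minus_t_pow y * Aser phi) $ n = Aser (Sy nabs y phi) $ n" .
qed

theorem proposition6p2:
  fixes p :: nat and nabs :: "'a::field_char_0 \<Rightarrow> real"
    and phi :: "'a \<Rightarrow> 'a" and y :: 'a
  assumes "prime p"
    and "is_Cp p nabs"
    and "continuous_on_abs nabs (Zp nabs) phi"
    and "y \<in> Zp nabs"
  shows "one_minus_t_pow y * Aser phi = Aser (Sy nabs y phi)
       \<and> one_minus_t_pow y * Pser phi = Pser (Sy nabs y phi)"
proof -
  have ab: "is_abs nabs" using assms(2) unfolding is_Cp_def by auto
  have A: "one_minus_t_pow y * Aser phi = Aser (Sy nabs y phi)" by (rule A_part[OF ab])
  have "one_minus_t_pow y * Pser phi = fps_exp (-1) * (one_minus_t_pow y * Aser phi)"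
    by (simp add: Pser_Aser mult.left_commute)
  also have "\<dots> = Pser (Sy nabs y phi)" by (simp add: A Pser_Aser)
  finally show ?thesis using A by simp
qed

end
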